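(* A linear map $T:\mathbb C^d\to\mathbb C^d$ ($d$ a positive integer) is recurrent if and only if it is similar to a diagonal matrix all of whose diagonal entries have modulus $1$.
   Context: $T$ is recurrent if for every non-empty open $U\subset\mathbb C^d$ there is a positive integer $k$ with $U\cap T^{-k}(U)\neq\emptyset$. *)

theory Defs
  imports "HOL-Analysis.Analysis"
begin

definition recurrent :: "('a::topological_space \<Rightarrow> 'a) \<Rightarrow> bool" where
  "recurrent T \<longleftrightarrow>
     (\<forall>U. open U \<and> U \<noteq> {} \<longrightarrow> (\<exists>k::nat. k > 0 \<and> U \<inter> (T ^^ k) -` U \<noteq> {}))"

end

theory Submission
  imports Defs "Jordan_Normal_Form.Jordan_Normal_Form_Existence"
begin


no_notation Matrix.vec_index (infixl \<open>$\<close> 100)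

abbreviation vone :: "'a::{zero,one}^'n^'n" where "vone \<equiv> Finite_Cartesian_Product.mat 1"

lemma norm_le_sum_cart: "norm (x::'a::real_normed_vector^'n) \<le> (\<Sum>i\<in>UNIV. norm (x$i))"
  unfolding norm_vec_def by (rule L2_set_le_sum) auto

lemma dirichlet:
  fixes d :: "complex^'n"
  assumes d: "\<And>i. norm (d$i) = 1" and e: "e > 0"
  shows "\<exists>k>0. \<forall>i. norm (d$i ^ k - 1) < e"
proof -
  define f where "f k = (\<chi> i. d$i ^ k)" for k :: nat
  have "norm (f k) \<le> real CARD('n)" for k
  proof -
    have "norm (f k) \<le> (\<Sum>i\<in>UNIV. norm (f k $ i))" by (rule norm_le_sum_cart)
    also have "\<dots> = (\<Sum>i\<in>(UNIV::'n set). 1)" by (simp add: f_def norm_power d)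
    finally show ?thesis by simp
  qed
  hence "bounded (range f)" unfolding bounded_iff by blast
  then obtain l r where r: "strict_mono r" and lim: "(f \<circ> r) \<longlonglongrightarrow> l"
    using bounded_imp_convergent_subsequence by blast
  from LIMSEQ_imp_Cauchy[OF lim] e obtain N where N: "\<And>m n. m \<ge> N \<Longrightarrow> n \<ge> N \<Longrightarrow> dist ((f\<circ>r) m) ((f\<circ>r) n) < e"
    unfolding Cauchy_def by meson
  define m where "m = r N"
  define n where "n = r (Suc N)"
  have mn: "m < n" using r unfolding m_def n_def strict_mono_def by auto
  have dd: "dist (f n) (f m) < e" using N[of "Suc N" N] by (simp add: m_def n_def)
  show ?thesis
  proof (intro exI[of _ "n - m"] conjI allI)
    show "n - m > 0" using mn by simp
    fix i
    have "d$i ^ n - d$i ^ m = d$i ^ m * (d$i ^ (n-m) - 1)"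
      using mn by (simp add: algebra_simps flip: power_add)
    hence "norm (d$i ^ (n-m) - 1) = norm (d$i ^ n - d$i ^ m)"
      by (simp add: norm_mult norm_power d)
    also have "\<dots> = norm ((f n - f m) $ i)" by (simp add: f_def)
    also have "\<dots> \<le> norm (f n - f m)" using Finite_Cartesian_Product.norm_nth_le[where x="f n - f m" and i=i] by simp
    also have "\<dots> < e" using dd by (simp add: dist_norm)
    finally show "norm (d$i ^ (n-m) - 1) < e" .
  qed
qed

lemma diag_mult:
  fixes D :: "'a::comm_ring_1^'n^'n"
  assumes "\<And>i j. i \<noteq> j \<Longrightarrow> D$i$j = 0"
  shows "(D *v w) $ i = D$i$i * w$i"
proof -
  have "(\<Sum>j\<in>UNIV. D$i$j * w$j) = (\<Sum>j\<in>UNIV. if j = i then D$i$i * w$i else 0)"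
    by (rule sum.cong) (auto simp: assms)
  hence "(D *v w) $ i = (\<Sum>j\<in>UNIV. if j = i then D$i$i * w$i else 0)"
    unfolding matrix_vector_mult_def by simp
  thus ?thesis by simp
qed

lemma diag_recurrent:
  fixes D :: "complex^'n^'n"
  assumes off: "\<And>i j. i \<noteq> j \<Longrightarrow> D$i$j = 0" and un: "\<And>i. norm (D$i$i) = 1"
  shows "recurrent (\<lambda>x. D *v x)"
  unfolding recurrent_def
proof (intro allI impI)
  fix U :: "(complex^'n) set" assume U: "open U \<and> U \<noteq> {}"
  then obtain x where x: "x \<in> U" by blast
  then obtain e where e: "e > 0" "ball x e \<subseteq> U" using U open_contains_ball by blast
  have pw: "((\<lambda>x. D *v x) ^^ k) y = (\<chi> i. D$i$i ^ k * y$i)" for k y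
  proof (induction k)
    case (Suc k)
    show ?case
    proof (rule Finite_Cartesian_Product.vec_eq_iff[THEN iffD2], rule allI)
      fix i
      show "((\<lambda>x. D *v x) ^^ Suc k) y $ i = (\<chi> i. D$i$i ^ Suc k * y$i) $ i"
        using diag_mult[OF off, of "(\<chi> i. D$i$i ^ k * y$i)" i] by (simp add: Suc)
    qed
  qed (simp add: Finite_Cartesian_Product.vec_eq_iff)
  define c where "c = (e/2) / (real CARD('n) * (norm x + 1))"
  have nx: "norm x + 1 > 0" using Real_Vector_Spaces.norm_ge_zero[of x] by linarith
  have pos: "real CARD('n) * (norm x + 1) > 0"
    using nx by simp
  have c: "c > 0" unfolding c_def by (rule divide_pos_pos[OF _ pos]) (use e in simp)
  obtain k where k: "k > 0" "\<And>i. norm ((\<chi> i. D$i$i) $ i ^ k - 1) < c"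
    using dirichlet[of "\<chi> i. D$i$i" c] un c by auto
  have "dist (((\<lambda>x. D *v x) ^^ k) x) x \<le> (\<Sum>i\<in>UNIV. norm ((((\<lambda>x. D *v x) ^^ k) x - x) $ i))"
    unfolding dist_norm by (rule norm_le_sum_cart)
  also have "\<dots> = (\<Sum>i\<in>UNIV. norm (D$i$i ^ k - 1) * norm (x$i))"
    by (simp add: pw algebra_simps flip: norm_mult)
  also have "\<dots> \<le> (\<Sum>i\<in>(UNIV::'n set). c * (norm x + 1))"
  proof (rule sum_mono)
    fix i
    have "norm (D$i$i ^ k - 1) \<le> c" using k(2)[of i] by simp
    moreover have "norm (x$i) \<le> norm x + 1" using Finite_Cartesian_Product.norm_nth_le[of x i] by simp
    ultimately show "norm (D$i$i ^ k - 1) * norm (x$i) \<le> c * (norm x + 1)"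
      by (intro mult_mono) (use c in auto)
  qed
  also have "\<dots> = e/2" using pos nx by (simp add: c_def)
  finally have "dist (((\<lambda>x. D *v x) ^^ k) x) x \<le> e/2" .
  hence "((\<lambda>x. D *v x) ^^ k) x \<in> U" using e by (auto simp: dist_commute)
  thus "\<exists>k>0. U \<inter> ((\<lambda>x. D *v x) ^^ k) -` U \<noteq> {}" using k(1) x by blast
qed
lemma conj_recurrent:
  fixes A M P Q :: "complex^'n^'n"
  assumes rec: "recurrent (\<lambda>x. A *v x)" and AM: "A = P ** M ** Q"
    and PQ: "P ** Q = vone" and QP: "Q ** P = vone"
  shows "recurrent (\<lambda>x. M *v x)"
  unfolding recurrent_def
proof (intro allI impI)
  have QPw: "Q *v (P *v w) = w" for w
    by (simp add: matrix_vector_mul_assoc QP)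
  have pw: "((\<lambda>x. A *v x) ^^ k) x = P *v (((\<lambda>x. M *v x) ^^ k) (Q *v x))" for k x
  proof (induction k)
    case 0
    then show ?case by (simp add: matrix_vector_mul_assoc PQ)
  next
    case (Suc k)
    have "((\<lambda>x. A *v x) ^^ Suc k) x = A *v (P *v (((\<lambda>x. M *v x) ^^ k) (Q *v x)))"
      by (simp add: Suc)
    also have "\<dots> = P *v (M *v (Q *v (P *v (((\<lambda>x. M *v x) ^^ k) (Q *v x)))))"
      unfolding AM by (simp add: matrix_vector_mul_assoc matrix_mul_assoc)
    also have "\<dots> = P *v (((\<lambda>x. M *v x) ^^ Suc k) (Q *v x))"
      by (simp add: QPw)
    finally show ?case .
  qed
  fix U :: "(complex^'n) set" assume U: "open U \<and> U \<noteq> {}"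
  define U' where "U' = (\<lambda>x. Q *v x) -` U"
  have "open U'" unfolding U'_def
    using U by (intro open_vimage matrix_vector_mult_linear_continuous_on) auto
  moreover obtain u where "u \<in> U" using U by blast
  hence "P *v u \<in> U'" by (simp add: U'_def QPw)
  ultimately obtain k where k: "k > 0" "U' \<inter> ((\<lambda>x. A *v x) ^^ k) -` U' \<noteq> {}"
    using rec unfolding recurrent_def by blast
  then obtain x where x: "Q *v x \<in> U" "Q *v (((\<lambda>x. A *v x) ^^ k) x) \<in> U"
    unfolding U'_def by blast
  have "((\<lambda>x. M *v x) ^^ k) (Q *v x) \<in> U" using x(2) by (simp add: pw QPw)
  thus "\<exists>k>0. U \<inter> ((\<lambda>x. M *v x) ^^ k) -` U \<noteq> {}" using k(1) x(1) by blast
qed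

lemma pure_row_pow:
  fixes M :: "complex^'n^'n"
  assumes row: "\<And>b. b \<noteq> a \<Longrightarrow> M$a$b = 0"
  shows "(((\<lambda>x. M *v x) ^^ k) y) $ a = M$a$a ^ k * y$a"
proof (induction k)
  case (Suc k)
  have "(M *v z) $ a = M$a$a * z$a" for z
  proof -
    have "(\<Sum>j\<in>UNIV. M$a$j * z$j) = (\<Sum>j\<in>UNIV. if j = a then M$a$a * z$a else 0)"
      by (rule sum.cong) (auto simp: row)
    thus ?thesis unfolding matrix_vector_mult_def by simp
  qed
  then show ?case by (simp add: Suc)
qed simp

lemma pure_row_unimodular:
  fixes M :: "complex^'n^'n"
  assumes rec: "recurrent (\<lambda>x. M *v x)" and row: "\<And>b. b \<noteq> a \<Longrightarrow> M$a$b = 0"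
  shows "norm (M$a$a) = 1"
proof (rule ccontr)
  assume ne: "norm (M$a$a) \<noteq> 1"
  define \<mu> where "\<mu> = norm (M$a$a)"
  have mu0: "\<mu> \<ge> 0" by (simp add: \<mu>_def)
  define \<delta> where "\<delta> = \<bar>\<mu> - 1\<bar> / (\<mu> + 1)"
  have ne': "\<mu> \<noteq> 1" using ne by (simp add: \<mu>_def)
  have d0: "\<delta> > 0" unfolding \<delta>_def using ne' mu0 by (intro divide_pos_pos) auto
  define U where "U = {y::complex^'n. 1 - \<delta> < norm (y$a) \<and> norm (y$a) < 1 + \<delta>}"
  have cont: "continuous_on UNIV (\<lambda>y::complex^'n. norm (y$a))"
    by (intro continuous_intros linear_continuous_on bounded_linear_vec_nth)
  have "open U" unfolding U_def
    by (intro open_Collect_conj open_Collect_less continuous_intros cont)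
  moreover have "axis a 1 \<in> U" using d0 by (simp add: U_def axis_def)
  ultimately obtain k where k: "k > 0" "U \<inter> ((\<lambda>x. M *v x) ^^ k) -` U \<noteq> {}"
    using rec unfolding recurrent_def by blast
  then obtain y where y: "y \<in> U" "((\<lambda>x. M *v x) ^^ k) y \<in> U" by blast
  hence y1: "1 - \<delta> < norm (y$a)" "norm (y$a) < 1 + \<delta>"
    and y2: "1 - \<delta> < \<mu>^k * norm (y$a)" "\<mu>^k * norm (y$a) < 1 + \<delta>"
    by (auto simp: U_def pure_row_pow[OF row] norm_mult norm_power \<mu>_def)
  show False
  proof (cases "\<mu> > 1")
    case True
    have "\<mu> ^ 1 \<le> \<mu> ^ k" using True k(1) by (intro power_increasing) auto
    hence "\<mu> * norm (y$a) \<le> \<mu>^k * norm (y$a)" by (intro mult_right_mono) auto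
    moreover have "\<mu> * (1 - \<delta>) = 1 + \<delta>" using True by (simp add: \<delta>_def field_simps)
    moreover have "\<mu> * (1 - \<delta>) < \<mu> * norm (y$a)" using True y1 by simp
    ultimately show False using y2 by linarith
  next
    case False
    hence lt: "\<mu> < 1" using ne' by simp
    have "\<mu> ^ k \<le> \<mu> ^ 1" using lt mu0 k(1) by (intro power_decreasing) auto
    hence "\<mu>^k * norm (y$a) \<le> \<mu> * norm (y$a)" by (intro mult_right_mono) auto
    moreover have "\<mu> * (1 + \<delta>) = 1 - \<delta>" using lt mu0 by (simp add: \<delta>_def field_simps)
    moreover have "\<mu> * norm (y$a) \<le> \<mu> * (1 + \<delta>)" using mu0 y1 by (intro mult_left_mono) auto
    ultimately show False using y2 by linarith
  qed
qed

lemma chain_not_recurrent: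
  fixes M :: "complex^'n^'n"
  assumes rec: "recurrent (\<lambda>x. M *v x)" and ac: "a \<noteq> c"
    and rowa: "\<And>b. b \<noteq> a \<Longrightarrow> b \<noteq> c \<Longrightarrow> M$a$b = 0" and ac1: "M$a$c = 1"
    and rowc: "\<And>b. b \<noteq> c \<Longrightarrow> M$c$b = 0" and cc: "M$c$c = M$a$a"
  shows False
proof -
  define l where "l = M$a$a"
  have l1: "norm l = 1" using pure_row_unimodular[OF rec rowc] cc by (simp add: l_def)
  have powc: "(((\<lambda>x. M *v x) ^^ k) y) $ c = l ^ k * y$c" for k y
    using pure_row_pow[OF rowc] cc by (simp add: l_def)
  have stepa: "(M *v z) $ a = l * z$a + z$c" for z
  proof -
    have "\<And>j. M$a$j * z$j = (if j = a then l * z$a else 0) + (if j = c then z$c else 0)"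
      using ac rowa ac1 by (auto simp: l_def)
    hence "(\<Sum>j\<in>UNIV. M$a$j * z$j) = (\<Sum>j\<in>UNIV. (if j = a then l * z$a else 0) + (if j = c then z$c else 0))"
      by simp
    also have "\<dots> = l * z$a + z$c" by (simp add: sum.distrib)
    finally show ?thesis unfolding matrix_vector_mult_def by simp
  qed
  have powa: "(((\<lambda>x. M *v x) ^^ Suc k) y) $ a = l ^ Suc k * y$a + of_nat (Suc k) * l ^ k * y$c" for k y
  proof (induction k)
    case 0
    then show ?case by (simp add: stepa)
  next
    case (Suc k)
    have "(((\<lambda>x. M *v x) ^^ Suc (Suc k)) y) $ a = l * (((\<lambda>x. M *v x) ^^ Suc k) y) $ a + (((\<lambda>x. M *v x) ^^ Suc k) y) $ c"
      by (simp only: funpow.simps o_apply stepa)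
    also have "\<dots> = l ^ Suc (Suc k) * y$a + of_nat (Suc (Suc k)) * l ^ Suc k * y$c"
      unfolding Suc powc by (simp add: algebra_simps)
    finally show ?case .
  qed
  define U where "U = {y::complex^'n. norm (y$c - 1) < 1/4 \<and> norm (y$a) < 1/4}"
  have "open U" unfolding U_def
    by (intro open_Collect_conj open_Collect_less continuous_intros
        linear_continuous_on bounded_linear_vec_nth)
  moreover have "axis c 1 \<in> U" using ac by (simp add: U_def axis_def)
  ultimately obtain k where k: "k > 0" "U \<inter> ((\<lambda>x. M *v x) ^^ k) -` U \<noteq> {}"
    using rec unfolding recurrent_def by blast
  then obtain y where y: "y \<in> U" "((\<lambda>x. M *v x) ^^ k) y \<in> U" by blast
  obtain m where km: "k = Suc m" using k(1) by (cases k) auto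
  have yc: "norm (y$c) > 3/4"
  proof -
    have "1 \<le> norm (y$c) + norm (y$c - 1)" using norm_triangle_ineq4[of "y$c" "y$c - 1"] by simp
    thus ?thesis using y(1) by (simp add: U_def)
  qed
  have ya: "norm (y$a) < 1/4" using y(1) by (simp add: U_def)
  have za: "norm (l ^ Suc m * y$a + of_nat (Suc m) * l ^ m * y$c) < 1/4"
  proof -
    have "norm ((((\<lambda>x. M *v x) ^^ k) y) $ a) < 1/4" using y(2) by (simp add: U_def)
    thus ?thesis unfolding km powa .
  qed
  have "norm (of_nat (Suc m) * l ^ m * y$c) = real (Suc m) * norm (y$c)"
    by (simp only: norm_mult norm_power l1 norm_of_nat) simp
  also have "\<dots> \<ge> norm (y$c)" using yc by (simp add: mult_le_cancel_right1)
  finally have b1: "norm (of_nat (Suc m) * l ^ m * y$c) \<ge> norm (y$c)" .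
  have b2: "norm (l ^ Suc m * y$a) = norm (y$a)" by (simp add: norm_mult norm_power l1)
  have "norm (of_nat (Suc m) * l ^ m * y$c) \<le> norm (l ^ Suc m * y$a + of_nat (Suc m) * l ^ m * y$c) + norm (l ^ Suc m * y$a)"
    using norm_triangle_ineq4[of "l ^ Suc m * y$a + of_nat (Suc m) * l ^ m * y$c" "l ^ Suc m * y$a"] by simp
  thus False using b1 b2 za ya yc by linarith
qed



lemma jm_struct:
  "i < sum_list (map fst n_as) \<Longrightarrow> j < sum_list (map fst n_as) \<Longrightarrow> i \<noteq> j \<Longrightarrow>
   jordan_matrix n_as $$ (i,j) = 0 \<or> (j = Suc i \<and> jordan_matrix n_as $$ (i,j) = 1 \<and>
     jordan_matrix n_as $$ (j,j) = jordan_matrix n_as $$ (i,i))"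
proof (induction n_as arbitrary: i j)
  case Nil
  then show ?case by simp
next
  case (Cons na n_as)
  obtain m a where na: "na = (m,a)" by force
  let ?N = "sum_list (map fst n_as)"
  have dims: "i < dim_row (jordan_block m a) + dim_row (jordan_matrix n_as)"
     "j < dim_col (jordan_block m a) + dim_col (jordan_matrix n_as)"
     "j < dim_row (jordan_block m a) + dim_row (jordan_matrix n_as)"
     "i < dim_col (jordan_block m a) + dim_col (jordan_matrix n_as)"
    using Cons.prems by (auto simp: na)
  show ?case
  proof (cases "i < m")
    case True
    then show ?thesis using Cons.prems dims
      unfolding na jordan_matrix_Cons by (auto simp: index_mat_four_block)
  next
    case False
    show ?thesis
    proof (cases "j < m")
      case True
      then show ?thesis using False Cons.prems dims
        unfolding na jordan_matrix_Cons by (auto simp: index_mat_four_block)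
    next
      case jF: False
      have IH: "jordan_matrix n_as $$ (i-m, j-m) = 0 \<or> (j - m = Suc (i - m) \<and> jordan_matrix n_as $$ (i-m,j-m) = 1 \<and>
          jordan_matrix n_as $$ (j-m,j-m) = jordan_matrix n_as $$ (i-m,i-m))"
        using Cons.IH[of "i - m" "j - m"] Cons.prems False jF by (auto simp: na)
      have eq: "j - m = Suc (i - m) \<longleftrightarrow> j = Suc i" using False jF by arith
      show ?thesis using False jF Cons.prems dims IH eq
        unfolding na jordan_matrix_Cons by (auto simp: index_mat_four_block)
    qed
  qed
qed

definition fr :: "('n::finite \<Rightarrow> nat) \<Rightarrow> 'a mat \<Rightarrow> 'a^'n^'n" where
  "fr h M = (\<chi> a b. M $$ (h a, h b))"

definition to_m :: "('n::finite \<Rightarrow> nat) \<Rightarrow> 'a^'n^'n \<Rightarrow> 'a mat" where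
  "to_m h A = Matrix.mat CARD('n) CARD('n) (\<lambda>(i,j). A $ inv_into UNIV h i $ inv_into UNIV h j)"

lemma to_m_carrier: "to_m (h::'n::finite\<Rightarrow>nat) (A::'a^'n^'n) \<in> carrier_mat CARD('n) CARD('n)"
  by (simp add: to_m_def)

lemma bij_lt: "bij_betw h (UNIV::'n::finite set) {0..<CARD('n)} \<Longrightarrow> h a < CARD('n)"
  using bij_betwE by fastforce

lemma fr_to_m:
  assumes hb: "bij_betw h (UNIV::'n::finite set) {0..<CARD('n)}"
  shows "fr h (to_m h (A::'a^'n^'n)) = A"
proof -
  have inj: "inj h" using hb bij_betw_imp_inj_on by blast
  show ?thesis unfolding fr_def to_m_def Finite_Cartesian_Product.vec_eq_iff
    using bij_lt[OF hb] by (simp add: inv_into_f_f[OF inj])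
qed

lemma fr_mult:
  assumes hb: "bij_betw h (UNIV::'n::finite set) {0..<CARD('n)}"
    and M: "M \<in> carrier_mat CARD('n) CARD('n)" and N: "N \<in> carrier_mat CARD('n) CARD('n)"
  shows "fr h (M * N) = (fr h M ** fr h N :: 'a::comm_ring_1^'n^'n)"
proof -
  { fix a c :: 'n
    have "(M * N) $$ (h a, h c) = (\<Sum>k = 0..<CARD('n). M $$ (h a, k) * N $$ (k, h c))"
      using M N bij_lt[OF hb] by (simp add: scalar_prod_def)
    also have "\<dots> = (\<Sum>b\<in>UNIV. M $$ (h a, h b) * N $$ (h b, h c))"
      by (rule sum.reindex_bij_betw[OF hb, symmetric])
    finally have "(M * N) $$ (h a, h c) = (\<Sum>b\<in>UNIV. M $$ (h a, h b) * N $$ (h b, h c))" . }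
  thus ?thesis unfolding fr_def Finite_Cartesian_Product.vec_eq_iff matrix_matrix_mult_def by simp
qed

lemma fr_one:
  assumes hb: "bij_betw h (UNIV::'n::finite set) {0..<CARD('n)}"
  shows "fr h (1\<^sub>m CARD('n)) = (vone :: 'a::{zero,one}^'n^'n)"
proof -
  have inj: "inj h" using hb bij_betw_imp_inj_on by blast
  show ?thesis unfolding fr_def Finite_Cartesian_Product.vec_eq_iff Finite_Cartesian_Product.mat_def
    using bij_lt[OF hb] inj by (auto simp: inj_eq)
qed

lemma inv_unique:
  fixes P Q :: "'a::comm_ring_1^'n^'n"
  assumes PQ: "P ** Q = vone" and QP: "Q ** P = vone"
  shows "invertible P \<and> matrix_inv P = Q"
proof -
  have uq: "X = Q" if "P ** X = vone" "X ** P = vone" for X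
  proof -
    have "X = X ** (P ** Q)" by (simp add: PQ)
    also have "\<dots> = (X ** P) ** Q" by (simp add: matrix_mul_assoc)
    also have "\<dots> = Q" using that(2) by simp
    finally show ?thesis .
  qed
  have "invertible P" unfolding invertible_def using PQ QP by blast
  moreover have "matrix_inv P = Q" unfolding matrix_inv_def
  proof (rule some_equality)
    show "P ** Q = vone \<and> Q ** P = vone" using PQ QP by blast
  next
    fix X assume "P ** X = vone \<and> X ** P = vone" thus "X = Q" using uq by blast
  qed
  ultimately show ?thesis by blast
qed




lemma rec_imp_diag:
  fixes A :: "complex^'n^'n"
  assumes rec: "recurrent (\<lambda>x. A *v x)"
  shows "\<exists>P D :: complex ^ 'n ^ 'n. invertible P \<and>
        (\<forall>i j. i \<noteq> j \<longrightarrow> D $ i $ j = 0) \<and>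
        (\<forall>i. norm (D $ i $ i) = 1) \<and>
        A = P ** D ** matrix_inv P"
proof -
  obtain h where hb: "bij_betw h (UNIV::'n set) {0..<CARD('n)}"
    using ex_bij_betw_finite_nat[of "UNIV::'n set"] by auto
  have inj: "inj h" using hb bij_betw_imp_inj_on by blast
  let ?n = "CARD('n)"
  let ?A = "to_m h A"
  have Ac: "?A \<in> carrier_mat ?n ?n" by (rule to_m_carrier)
  obtain as where "char_poly ?A = (\<Prod> a \<leftarrow> as. [:- a, 1:])"
    using char_poly_factorized[OF Ac] by blast
  from jordan_nf_exists[OF Ac this] obtain n_as where "jordan_nf ?A n_as" by blast
  then obtain P Q where wit: "similar_mat_wit ?A (jordan_matrix n_as) P Q"
    unfolding jordan_nf_def similar_mat_def by blast
  let ?J = "jordan_matrix n_as"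
  have dimA: "dim_row ?A = ?n" using Ac by simp
  have Jc: "?J \<in> carrier_mat ?n ?n" and Pc: "P \<in> carrier_mat ?n ?n" and Qc: "Q \<in> carrier_mat ?n ?n"
    and PQ: "P * Q = 1\<^sub>m ?n" and QP: "Q * P = 1\<^sub>m ?n" and AJ: "?A = P * ?J * Q"
  proof -
    have w: "{?A, ?J, P, Q} \<subseteq> carrier_mat ?n ?n \<and> P * Q = 1\<^sub>m ?n \<and> Q * P = 1\<^sub>m ?n \<and> ?A = P * ?J * Q"
      using wit unfolding similar_mat_wit_def Let_def dimA .
    thus "?J \<in> carrier_mat ?n ?n" "P \<in> carrier_mat ?n ?n" "Q \<in> carrier_mat ?n ?n"
      "P * Q = 1\<^sub>m ?n" "Q * P = 1\<^sub>m ?n" "?A = P * ?J * Q" by blast+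
  qed
  have sl: "sum_list (map fst n_as) = ?n" using carrier_matD(1)[OF Jc] by simp
  define Pv where "Pv = fr h P"
  define Jv where "Jv = fr h ?J"
  define Qv where "Qv = fr h Q"
  have "A = fr h ?A" by (rule fr_to_m[OF hb, symmetric])
  also have "\<dots> = fr h (P * ?J) ** Qv" unfolding AJ Qv_def
    by (rule fr_mult[OF hb _ Qc]) (use Pc Jc in auto)
  also have "\<dots> = Pv ** Jv ** Qv" unfolding Pv_def Jv_def fr_mult[OF hb Pc Jc] ..
  finally have AE: "A = Pv ** Jv ** Qv" .
  have PQv: "Pv ** Qv = vone" unfolding Pv_def Qv_def fr_mult[OF hb Pc Qc, symmetric] PQ
    by (rule fr_one[OF hb])
  have QPv: "Qv ** Pv = vone" unfolding Pv_def Qv_def fr_mult[OF hb Qc Pc, symmetric] QP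
    by (rule fr_one[OF hb])
  have recJ: "recurrent (\<lambda>x. Jv *v x)" by (rule conj_recurrent[OF rec AE PQv QPv])
  have struct: "Jv$a$b = 0 \<or> (h b = Suc (h a) \<and> Jv$a$b = 1 \<and> Jv$b$b = Jv$a$a)" if "a \<noteq> b" for a b
  proof -
    have Jv_ix: "Jv$x$y = ?J $$ (h x, h y)" for x y by (simp add: Jv_def fr_def)
    have "h a \<noteq> h b" using that inj by (simp add: inj_eq)
    then have "?J $$ (h a, h b) = 0 \<or> (h b = Suc (h a) \<and> ?J $$ (h a, h b) = 1 \<and> ?J $$ (h b, h b) = ?J $$ (h a, h a))"
      using jm_struct[of "h a" n_as "h b"] bij_lt[OF hb, of a] bij_lt[OF hb, of b] unfolding sl by blast
    thus ?thesis unfolding Jv_ix .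
  qed
  have diag: "Jv$a$b = 0" if "a \<noteq> b" for a b
  proof (rule ccontr)
    assume nz: "Jv$a$b \<noteq> 0"
    define S where "S = {a. \<exists>b. b \<noteq> a \<and> Jv$a$b \<noteq> 0}"
    have "a \<in> S" using nz that unfolding S_def by auto
    hence Sne: "h ` S \<noteq> {}" by blast
    define m where "m = Max (h ` S)"
    have "m \<in> h ` S" unfolding m_def by (rule Max_in) (use Sne in auto)
    then obtain a0 where a0: "a0 \<in> S" "h a0 = m" by blast
    have mx: "h x \<le> h a0" if "x \<in> S" for x unfolding a0(2) m_def
      by (rule Max_ge) (use that in auto)
    obtain b0 where b0: "b0 \<noteq> a0" "Jv$a0$b0 \<noteq> 0" using a0(1) unfolding S_def by auto
    have "a0 \<noteq> b0" using b0(1) by simp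
    from struct[OF this] b0(2) have hb0: "h b0 = Suc (h a0)" "Jv$a0$b0 = 1" "Jv$b0$b0 = Jv$a0$a0" by auto
    have rowb: "Jv$b0$b' = 0" if "b' \<noteq> b0" for b'
    proof (rule ccontr)
      assume "Jv$b0$b' \<noteq> 0"
      hence "b0 \<in> S" using that unfolding S_def by auto
      thus False using mx[of b0] hb0 by simp
    qed
    have rowa: "Jv$a0$b' = 0" if "b' \<noteq> a0" "b' \<noteq> b0" for b'
    proof (rule ccontr)
      assume "Jv$a0$b' \<noteq> 0"
      moreover have "a0 \<noteq> b'" using that(1) by simp
      ultimately have "h b' = Suc (h a0)" using struct[of a0 b'] by auto
      hence "h b' = h b0" using hb0 by simp
      thus False using that inj by (simp add: inj_eq)
    qed
    show False using chain_not_recurrent[OF recJ, of a0 b0] b0(1) rowa hb0 rowb by auto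
  qed
  have unim: "norm (Jv$i$i) = 1" for i
    by (rule pure_row_unimodular[OF recJ]) (use diag in auto)
  have "invertible Pv \<and> matrix_inv Pv = Qv" by (rule inv_unique[OF PQv QPv])
  thus ?thesis using AE diag unim by blast
qed


theorem theorem4p1:
  fixes A :: "complex ^ 'n ^ 'n"
  shows "recurrent (\<lambda>x. A *v x) \<longleftrightarrow>
    (\<exists>P D :: complex ^ 'n ^ 'n. invertible P \<and>
        (\<forall>i j. i \<noteq> j \<longrightarrow> D $ i $ j = 0) \<and>
        (\<forall>i. norm (D $ i $ i) = 1) \<and>
        A = P ** D ** matrix_inv P)"
proof
  assume "recurrent (\<lambda>x. A *v x)"
  thus "\<exists>P D :: complex ^ 'n ^ 'n. invertible P \<and>
        (\<forall>i j. i \<noteq> j \<longrightarrow> D $ i $ j = 0) \<and>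
        (\<forall>i. norm (D $ i $ i) = 1) \<and>
        A = P ** D ** matrix_inv P" by (rule rec_imp_diag)
next
  assume "\<exists>P D :: complex ^ 'n ^ 'n. invertible P \<and>
        (\<forall>i j. i \<noteq> j \<longrightarrow> D $ i $ j = 0) \<and>
        (\<forall>i. norm (D $ i $ i) = 1) \<and>
        A = P ** D ** matrix_inv P"
  then obtain P D :: "complex^'n^'n" where inv: "invertible P" and off: "\<forall>i j. i \<noteq> j \<longrightarrow> D $ i $ j = 0"
    and un: "\<forall>i. norm (D $ i $ i) = 1" and AD: "A = P ** D ** matrix_inv P" by blast
  define Q where "Q = matrix_inv P"
  have PQ: "P ** Q = vone \<and> Q ** P = vone"
    unfolding Q_def matrix_inv_def by (rule someI_ex) (use inv in \<open>simp add: invertible_def\<close>)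
  have "Q ** A ** P = (Q ** P) ** D ** (Q ** P)"
    unfolding AD Q_def[symmetric] by (simp add: matrix_mul_assoc)
  hence DA: "D = Q ** A ** P" using PQ by simp
  have "recurrent (\<lambda>x. D *v x)" by (rule diag_recurrent) (use off un in auto)
  thus "recurrent (\<lambda>x. A *v x)"
    by (rule conj_recurrent[OF _ DA]) (use PQ in auto)
qed

end
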